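(* Let $m,n\ge3$. The cycles $C_m$ and $C_n$ are never strongly disjoint. Moreover, $C_m$ and $C_n$ are weakly disjoint if and only if $\gcd(m,n)=1$.
   Context: A weight function on finite $U$ is $\alpha:U\times U\to\mathbb{R}$, $\alpha\ge0$, symmetric, summing to $1$; degree $p(u)=\sum_{u'}\alpha(u,u')$; a graph is $(U,\alpha)$. $C_k$ ($k\ge3$) is the cycle on vertices $u_1,\dots,u_k$ with $\alpha(u_i,u_{i\pm1})=1/(2k)$ (indices mod $k$) and all other weights $0$. For graphs $(U,\alpha)$, $(V,\beta)$ with degrees $p,q$, a weight joining is a weight function $\gamma$ on $U\times V$ with degree $r(u,v)=\sum_{(u',v')}\gamma((u,v),(u',v'))$ such that $\sum_v r(u,v)=p(u)$, $\sum_u r(u,v)=q(v)$, $p(u)\sum_{\tilde v}\gamma((u,v),(u',\tilde v))=\alpha(u,u')r(u,v)$ and $q(v)\sum_{\tilde u}\gamma((u,v),(\tilde u,v'))=\beta(v,v')r(u,v)$ for all $u,u',v,v'$. The graphs are strongly disjoint if the only weight joining is $\alpha\otimes\beta$, $(\alpha\otimes\beta)((u,v),(u',v'))=\alpha(u,u')\beta(v,v')$; weakly disjoint if every weight joining has degree $r(u,v)=p(u)q(v)$. *)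

theory Defs
  imports Complex_Main
begin

text \<open>A graph is a pair (U, alpha) with U a finite carrier and alpha a weight function on U.
  Functions are only considered on the carrier.\<close>

definition weight_fun :: "'a set \<Rightarrow> ('a \<Rightarrow> 'a \<Rightarrow> real) \<Rightarrow> bool" where
  "weight_fun U \<alpha> \<longleftrightarrow> finite U \<and>
     (\<forall>u\<in>U. \<forall>u'\<in>U. \<alpha> u u' \<ge> 0 \<and> \<alpha> u u' = \<alpha> u' u) \<and>
     (\<Sum>u\<in>U. \<Sum>u'\<in>U. \<alpha> u u') = 1"

definition wdeg :: "'a set \<Rightarrow> ('a \<Rightarrow> 'a \<Rightarrow> real) \<Rightarrow> 'a \<Rightarrow> real" where
  "wdeg U \<alpha> u = (\<Sum>u'\<in>U. \<alpha> u u')"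

text \<open>The cycle C_k on vertices 0,...,k-1 (u_i = i-1).\<close>
definition cycle_weight :: "nat \<Rightarrow> nat \<Rightarrow> nat \<Rightarrow> real" where
  "cycle_weight k i j = (if j = (i + 1) mod k \<or> i = (j + 1) mod k then 1 / (2 * real k) else 0)"

definition cycle_vertices :: "nat \<Rightarrow> nat set" where
  "cycle_vertices k = {..<k}"

definition weight_joining ::
  "'a set \<Rightarrow> ('a \<Rightarrow> 'a \<Rightarrow> real) \<Rightarrow> 'b set \<Rightarrow> ('b \<Rightarrow> 'b \<Rightarrow> real)
    \<Rightarrow> ('a \<times> 'b \<Rightarrow> 'a \<times> 'b \<Rightarrow> real) \<Rightarrow> bool" where
  "weight_joining U \<alpha> V \<beta> \<gamma> \<longleftrightarrow> weight_fun (U \<times> V) \<gamma> \<and>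
     (\<forall>u\<in>U. (\<Sum>v\<in>V. wdeg (U \<times> V) \<gamma> (u, v)) = wdeg U \<alpha> u) \<and>
     (\<forall>v\<in>V. (\<Sum>u\<in>U. wdeg (U \<times> V) \<gamma> (u, v)) = wdeg V \<beta> v) \<and>
     (\<forall>u\<in>U. \<forall>v\<in>V. \<forall>u'\<in>U.
        wdeg U \<alpha> u * (\<Sum>v'\<in>V. \<gamma> (u, v) (u', v')) = \<alpha> u u' * wdeg (U \<times> V) \<gamma> (u, v)) \<and>
     (\<forall>u\<in>U. \<forall>v\<in>V. \<forall>v'\<in>V.
        wdeg V \<beta> v * (\<Sum>u'\<in>U. \<gamma> (u, v) (u', v')) = \<beta> v v' * wdeg (U \<times> V) \<gamma> (u, v))"

definition strongly_disjoint ::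
  "'a set \<Rightarrow> ('a \<Rightarrow> 'a \<Rightarrow> real) \<Rightarrow> 'b set \<Rightarrow> ('b \<Rightarrow> 'b \<Rightarrow> real) \<Rightarrow> bool" where
  "strongly_disjoint U \<alpha> V \<beta> \<longleftrightarrow>
     (\<forall>\<gamma>. weight_joining U \<alpha> V \<beta> \<gamma> \<longrightarrow>
        (\<forall>x\<in>U \<times> V. \<forall>y\<in>U \<times> V. \<gamma> x y = \<alpha> (fst x) (fst y) * \<beta> (snd x) (snd y)))"

definition weakly_disjoint ::
  "'a set \<Rightarrow> ('a \<Rightarrow> 'a \<Rightarrow> real) \<Rightarrow> 'b set \<Rightarrow> ('b \<Rightarrow> 'b \<Rightarrow> real) \<Rightarrow> bool" where
  "weakly_disjoint U \<alpha> V \<beta> \<longleftrightarrow>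
     (\<forall>\<gamma>. weight_joining U \<alpha> V \<beta> \<gamma> \<longrightarrow>
        (\<forall>u\<in>U. \<forall>v\<in>V. wdeg (U \<times> V) \<gamma> (u, v) = wdeg U \<alpha> u * wdeg V \<beta> v))"

end

theory Submission
  imports Defs "HOL-Number_Theory.Cong"
begin

lemma modsuc: "u < m \<Longrightarrow> Suc u mod (m::nat) = (if Suc u = m then 0 else Suc u)"
  by auto

lemma modpred: "u < m \<Longrightarrow> (u + m - Suc 0) mod (m::nat) = (if u = 0 then m - 1 else u - 1)"
proof (cases "u = 0")
  case False
  assume "u < m"
  then have "u + m - Suc 0 = (u - 1) + m" using False by simp
  then have "(u + m - Suc 0) mod m = (u - 1) mod m" by simp
  then show ?thesis using False \<open>u < m\<close> by simp
qed simp

lemma mod_pred_iff: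
  fixes i j m :: nat
  assumes "i < m" "j < m"
  shows "i = (j + 1) mod m \<longleftrightarrow> j = (i + m - 1) mod m"
  using assms by (auto simp: modsuc modpred)

lemma cw_char:
  assumes "m \<ge> 3" "i < m" "j < m"
  shows "cycle_weight m i j = (if j = (i + 1) mod m \<or> j = (i + m - 1) mod m then 1 / (2 * real m) else 0)"
  unfolding cycle_weight_def by (simp only: mod_pred_iff[OF assms(2,3)])

lemma pm_ne:
  fixes u m :: nat
  assumes "m \<ge> 3" "u < m"
  shows "(u + 1) mod m \<noteq> (u + m - 1) mod m"
  using assms modsuc[OF assms(2)] modpred[OF assms(2)] by (auto split: if_splits)

lemma sum_two:
  fixes f :: "'a \<Rightarrow> real"
  assumes "finite A" "a \<in> A" "b \<in> A" "a \<noteq> b"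
  shows "(\<Sum>x\<in>A. f x * (if x = a \<or> x = b then c else 0)) = c * (f a + f b)"
proof -
  have "(\<Sum>x\<in>A. f x * (if x = a \<or> x = b then c else 0))
      = (\<Sum>x\<in>A. (if x = a then c * f x else 0) + (if x = b then c * f x else 0))"
    using assms(4) by (intro sum.cong) auto
  also have "\<dots> = c * f a + c * f b"
    using assms by (simp add: sum.distrib)
  finally show ?thesis by (simp add: algebra_simps)
qed

lemma cyc_sum:
  assumes "m \<ge> 3" "u < m"
  shows "(\<Sum>u'\<in>{..<m}. f u' * cycle_weight m u u') = (f ((u + 1) mod m) + f ((u + m - 1) mod m)) / (2 * real m)"
proof -
  have "(\<Sum>u'\<in>{..<m}. f u' * cycle_weight m u u') = (\<Sum>u'\<in>{..<m}. f u' * (if u' = (u + 1) mod m \<or> u' = (u + m - 1) mod m then 1 / (2 * real m) else 0))"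
    using assms by (intro sum.cong) (auto simp: cw_char)
  also have "\<dots> = (f ((u + 1) mod m) + f ((u + m - 1) mod m)) / (2 * real m)"
    using assms pm_ne[OF assms] by (subst sum_two) auto
  finally show ?thesis .
qed

lemma cyc_deg:
  assumes "m \<ge> 3" "u < m"
  shows "wdeg (cycle_vertices m) (cycle_weight m) u = 1 / real m"
  using cyc_sum[OF assms, of "\<lambda>_. 1"] assms unfolding wdeg_def cycle_vertices_def by simp


lemma count_mod:
  fixes n d a :: nat
  assumes "d > 0" "d dvd n" "a < d"
  shows "card {v\<in>{..<n}. v mod d = a} = n div d"
proof -
  obtain k where k: "n = d * k" using assms(2) by blast
  have "{v\<in>{..<n}. v mod d = a} = (\<lambda>j. a + d * j) ` {..<k}"
  proof (intro set_eqI iffI)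
    fix v assume "v \<in> {v\<in>{..<n}. v mod d = a}"
    then have v: "v < d * k" "v mod d = a" using k by auto
    have "v = a + d * (v div d)" using v(2) by (metis add.commute div_mult_mod_eq mult.commute)
    moreover have "v div d < k" using v(1) assms(1)
      by (simp add: div_less_iff_less_mult mult.commute)
    ultimately show "v \<in> (\<lambda>j. a + d * j) ` {..<k}" by blast
  next
    fix v assume "v \<in> (\<lambda>j. a + d * j) ` {..<k}"
    then obtain j where j: "j < k" "v = a + d * j" by auto
    have "a + d * j < d + d * j" using assms(3) by simp
    also have "\<dots> = d * (j + 1)" by (simp add: algebra_simps)
    also have "\<dots> \<le> d * k" using j(1) by (intro mult_le_mono2) simp
    finally have "v < n" using j k by simp
    moreover have "v mod d = a" using j assms(3) by simp
    ultimately show "v \<in> {v\<in>{..<n}. v mod d = a}" by simp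
  qed
  moreover have "inj_on (\<lambda>j. a + d * j) {..<k}" using assms(1) by (auto simp: inj_on_def)
  ultimately show ?thesis using k assms(1) by (simp add: card_image)
qed

lemma sum_mod_const:
  fixes n d a :: nat
  assumes "d > 0" "d dvd n"
  shows "(\<Sum>v\<in>{..<n}. if a mod d = v mod d then K else 0) = K * real (n div d)"
proof -
  have "(\<Sum>v\<in>{..<n}. if a mod d = v mod d then K else 0) = (\<Sum>v\<in>{v\<in>{..<n}. v mod d = a mod d}. K)"
    by (subst sum.inter_filter) (auto simp: eq_commute intro!: sum.cong)
  also have "\<dots> = K * real (n div d)" using count_mod[OF assms, of "a mod d"] assms(1) by simp
  finally show ?thesis .
qed

definition Np :: "nat \<Rightarrow> nat \<Rightarrow> nat \<times> nat \<Rightarrow> nat \<times> nat" where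
  "Np m n x = ((fst x + 1) mod m, (snd x + 1) mod n)"
definition Nm :: "nat \<Rightarrow> nat \<Rightarrow> nat \<times> nat \<Rightarrow> nat \<times> nat" where
  "Nm m n x = ((fst x + m - 1) mod m, (snd x + n - 1) mod n)"
definition gam :: "nat \<Rightarrow> nat \<Rightarrow> nat \<Rightarrow> nat \<times> nat \<Rightarrow> nat \<times> nat \<Rightarrow> real" where
  "gam m n d x y = (if fst x mod d = snd x mod d then real d / (2 * real m * real n) else 0)
     * ((if y = Np m n x then 1 else 0) + (if y = Nm m n x then 1 else 0))"

lemma NpW: "m \<ge> 3 \<Longrightarrow> n \<ge> 3 \<Longrightarrow> x \<in> {..<m} \<times> {..<n} \<Longrightarrow> Np m n x \<in> {..<m} \<times> {..<n}"
  by (auto simp: Np_def mem_Times_iff)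
lemma NmW: "m \<ge> 3 \<Longrightarrow> n \<ge> 3 \<Longrightarrow> x \<in> {..<m} \<times> {..<n} \<Longrightarrow> Nm m n x \<in> {..<m} \<times> {..<n}"
  by (auto simp: Nm_def mem_Times_iff)
lemma NpNm: "m \<ge> 3 \<Longrightarrow> n \<ge> 3 \<Longrightarrow> x \<in> {..<m} \<times> {..<n} \<Longrightarrow> Np m n x \<noteq> Nm m n x"
  using pm_ne[of m "fst x"] by (auto simp: Np_def Nm_def mem_Times_iff)
lemma NpNm_iff:
  assumes "x \<in> {..<m} \<times> {..<n}" "y \<in> {..<m} \<times> {..<n}"
  shows "y = Np m n x \<longleftrightarrow> x = Nm m n y"
  using mod_pred_iff[of "fst y" m "fst x"] mod_pred_iff[of "snd y" n "snd x"] assms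
  unfolding Np_def Nm_def by (cases x; cases y) (simp add: mem_Times_iff)

lemma S_Np:
  fixes d :: nat
  assumes "d dvd m" "d dvd n"
  shows "fst (Np m n x) mod d = snd (Np m n x) mod d \<longleftrightarrow> fst x mod d = snd x mod d"
proof -
  have "fst (Np m n x) mod d = (fst x + 1) mod d" using assms by (simp add: Np_def mod_mod_cancel)
  moreover have "snd (Np m n x) mod d = (snd x + 1) mod d" using assms by (simp add: Np_def mod_mod_cancel)
  moreover have "(fst x + 1) mod d = (snd x + 1) mod d \<longleftrightarrow> fst x mod d = snd x mod d"
    using cong_add_rcancel_nat[of "fst x" 1 "snd x" d] unfolding cong_def by simp
  ultimately show ?thesis by simp
qed


lemma sum_mod_const2:
  fixes n d a :: nat
  assumes "d > 0" "d dvd n"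
  shows "(\<Sum>v\<in>{..<n}. if v mod d = a mod d then K else 0) = K * real (n div d)"
  using sum_mod_const[OF assms, of a K] by (simp add: eq_commute)

lemma gam_sym:
  fixes d :: nat
  assumes "d dvd m" "d dvd n" "x \<in> {..<m} \<times> {..<n}" "y \<in> {..<m} \<times> {..<n}"
  shows "gam m n d x y = gam m n d y x"
proof -
  have i1: "y = Np m n x \<longleftrightarrow> x = Nm m n y" using NpNm_iff[OF assms(3,4)] .
  have i2: "x = Np m n y \<longleftrightarrow> y = Nm m n x" using NpNm_iff[OF assms(4,3)] .
  show ?thesis
  proof (cases "y = Np m n x \<or> x = Np m n y")
    case True
    then have "(fst x mod d = snd x mod d) = (fst y mod d = snd y mod d)"
      using S_Np[OF assms(1,2), of x] S_Np[OF assms(1,2), of y] by auto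
    then show ?thesis unfolding gam_def using i1 i2 by auto
  next
    case False
    then show ?thesis unfolding gam_def using i1 i2 by auto
  qed
qed

lemma gam_deg:
  assumes "m \<ge> 3" "n \<ge> 3" "x \<in> {..<m} \<times> {..<n}"
  shows "wdeg ({..<m} \<times> {..<n}) (gam m n d) x
     = (if fst x mod d = snd x mod d then real d / (real m * real n) else 0)"
proof -
  define K where "K = (if fst x mod d = snd x mod d then real d / (2 * real m * real n) else 0)"
  have s1: "(\<Sum>y\<in>{..<m} \<times> {..<n}. if y = Np m n x then 1 else 0) = (1::real)"
    using NpW[OF assms] by simp
  have s2: "(\<Sum>y\<in>{..<m} \<times> {..<n}. if y = Nm m n x then 1 else 0) = (1::real)"
    using NmW[OF assms] by simp
  have "wdeg ({..<m} \<times> {..<n}) (gam m n d) x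
     = (\<Sum>y\<in>{..<m} \<times> {..<n}. K * ((if y = Np m n x then 1 else 0) + (if y = Nm m n x then 1 else 0)))"
    unfolding wdeg_def gam_def K_def ..
  also have "\<dots> = K * ((\<Sum>y\<in>{..<m} \<times> {..<n}. if y = Np m n x then 1 else 0) + (\<Sum>y\<in>{..<m} \<times> {..<n}. if y = Nm m n x then 1 else 0))"
    by (subst sum_distrib_left[symmetric], subst sum.distrib, rule refl)
  also have "\<dots> = K * 2" by (simp only: s1 s2) simp
  finally show ?thesis by (simp add: K_def)
qed

lemma sum_ind2:
  fixes A A' :: real and b b' n :: nat
  assumes "b < n" "b' < n"
  shows "(\<Sum>v'\<in>{..<n}. K * (A * (if v' = b then 1 else 0) + A' * (if v' = b' then 1 else 0))) = K * (A + A')"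
proof -
  have "(\<Sum>v'\<in>{..<n}. K * (A * (if v' = b then 1 else 0) + A' * (if v' = b' then 1 else 0)))
    = K * (A * (\<Sum>v'\<in>{..<n}. if v' = b then 1 else 0) + A' * (\<Sum>v'\<in>{..<n}. if v' = b' then 1 else 0))"
    by (simp only: sum_distrib_left sum.distrib distrib_left)
  also have "\<dots> = K * (A + A')" using assms by simp
  finally show ?thesis .
qed

lemma gam_row:
  assumes "m \<ge> 3" "n \<ge> 3" "u < m" "v < n" "u' < m"
  shows "(\<Sum>v'\<in>{..<n}. gam m n d (u, v) (u', v'))
     = (if u mod d = v mod d then real d / (2 * real m * real n) else 0) *
       ((if u' = (u + 1) mod m then 1 else 0) + (if u' = (u + m - 1) mod m then 1 else 0))"
proof -
  define K where "K = (if u mod d = v mod d then real d / (2 * real m * real n) else 0)"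
  have "\<And>v'. gam m n d (u, v) (u', v') = K * ((if u' = (u + 1) mod m then 1 else 0) * (if v' = (v + 1) mod n then 1 else 0)
      + (if u' = (u + m - 1) mod m then 1 else 0) * (if v' = (v + n - 1) mod n then 1 else 0))"
    unfolding gam_def Np_def Nm_def K_def by simp
  then have "(\<Sum>v'\<in>{..<n}. gam m n d (u, v) (u', v')) = (\<Sum>v'\<in>{..<n}. K * ((if u' = (u + 1) mod m then 1 else 0) * (if v' = (v + 1) mod n then 1 else 0)
      + (if u' = (u + m - 1) mod m then 1 else 0) * (if v' = (v + n - 1) mod n then 1 else 0)))"
    by simp
  also have "\<dots> = K * ((if u' = (u + 1) mod m then 1 else 0) + (if u' = (u + m - 1) mod m then 1 else 0))"
    by (rule sum_ind2) (use assms in auto)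
  finally show ?thesis unfolding K_def .
qed

lemma gam_col:
  assumes "m \<ge> 3" "n \<ge> 3" "u < m" "v < n" "v' < n"
  shows "(\<Sum>u'\<in>{..<m}. gam m n d (u, v) (u', v'))
     = (if u mod d = v mod d then real d / (2 * real m * real n) else 0) *
       ((if v' = (v + 1) mod n then 1 else 0) + (if v' = (v + n - 1) mod n then 1 else 0))"
proof -
  define K where "K = (if u mod d = v mod d then real d / (2 * real m * real n) else 0)"
  have "\<And>u'. gam m n d (u, v) (u', v') = K * ((if v' = (v + 1) mod n then 1 else 0) * (if u' = (u + 1) mod m then 1 else 0)
      + (if v' = (v + n - 1) mod n then 1 else 0) * (if u' = (u + m - 1) mod m then 1 else 0))"
    unfolding gam_def Np_def Nm_def K_def by simp
  then have "(\<Sum>u'\<in>{..<m}. gam m n d (u, v) (u', v')) = (\<Sum>u'\<in>{..<m}. K * ((if v' = (v + 1) mod n then 1 else 0) * (if u' = (u + 1) mod m then 1 else 0)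
      + (if v' = (v + n - 1) mod n then 1 else 0) * (if u' = (u + m - 1) mod m then 1 else 0)))"
    by simp
  also have "\<dots> = K * ((if v' = (v + 1) mod n then 1 else 0) + (if v' = (v + n - 1) mod n then 1 else 0))"
    by (rule sum_ind2) (use assms in auto)
  finally show ?thesis unfolding K_def .
qed


lemma gam_joining:
  fixes d :: nat
  assumes m3: "m \<ge> 3" and n3: "n \<ge> 3" and d0: "d > 0" and dm: "d dvd m" and dn: "d dvd n"
  shows "weight_joining {..<m} (cycle_weight m) {..<n} (cycle_weight n) (gam m n d)"
proof -
  let ?W = "{..<m} \<times> {..<n}"
  have rowsum: "(\<Sum>v\<in>{..<n}. wdeg ?W (gam m n d) (u, v)) = 1 / real m" if "u < m" for u
  proof -
    have "(\<Sum>v\<in>{..<n}. wdeg ?W (gam m n d) (u, v)) = (\<Sum>v\<in>{..<n}. if u mod d = v mod d then real d / (real m * real n) else 0)"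
      using that m3 n3 by (intro sum.cong) (auto simp: gam_deg)
    also have "\<dots> = real d / (real m * real n) * real (n div d)" by (rule sum_mod_const[OF d0 dn])
    also have "\<dots> = 1 / real m" using d0 dn n3 by (simp add: real_of_nat_div)
    finally show ?thesis .
  qed
  have colsum: "(\<Sum>u\<in>{..<m}. wdeg ?W (gam m n d) (u, v)) = 1 / real n" if "v < n" for v
  proof -
    have "(\<Sum>u\<in>{..<m}. wdeg ?W (gam m n d) (u, v)) = (\<Sum>u\<in>{..<m}. if u mod d = v mod d then real d / (real m * real n) else 0)"
      using that m3 n3 by (intro sum.cong) (auto simp: gam_deg)
    also have "\<dots> = real d / (real m * real n) * real (m div d)" by (rule sum_mod_const2[OF d0 dm])
    also have "\<dots> = 1 / real n" using d0 dm m3 by (simp add: real_of_nat_div)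
    finally show ?thesis .
  qed
  have wf: "weight_fun ?W (gam m n d)"
    unfolding weight_fun_def
  proof (intro conjI ballI)
    show "finite ?W" by simp
  next
    fix x y assume "x \<in> ?W" "y \<in> ?W"
    then show "0 \<le> gam m n d x y" unfolding gam_def by simp
  next
    fix x y assume "x \<in> ?W" "y \<in> ?W"
    then show "gam m n d x y = gam m n d y x" by (rule gam_sym[OF dm dn])
  next
    have "(\<Sum>x\<in>?W. \<Sum>y\<in>?W. gam m n d x y) = (\<Sum>x\<in>?W. wdeg ?W (gam m n d) x)"
      unfolding wdeg_def ..
    also have "\<dots> = (\<Sum>u\<in>{..<m}. \<Sum>v\<in>{..<n}. wdeg ?W (gam m n d) (u, v))"
      by (simp add: sum.cartesian_product)
    also have "\<dots> = (\<Sum>u\<in>{..<m}. 1 / real m)" by (intro sum.cong) (auto simp: rowsum)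
    also have "\<dots> = 1" using m3 by simp
    finally show "(\<Sum>x\<in>?W. \<Sum>y\<in>?W. gam m n d x y) = 1" .
  qed
  show ?thesis
    unfolding weight_joining_def
  proof (intro conjI ballI)
    show "weight_fun ?W (gam m n d)" by (rule wf)
  next
    fix u assume "u \<in> {..<m}"
    then show "(\<Sum>v\<in>{..<n}. wdeg ?W (gam m n d) (u, v)) = wdeg {..<m} (cycle_weight m) u"
      using rowsum cyc_deg[OF m3] by (simp add: cycle_vertices_def)
  next
    fix v assume "v \<in> {..<n}"
    then show "(\<Sum>u\<in>{..<m}. wdeg ?W (gam m n d) (u, v)) = wdeg {..<n} (cycle_weight n) v"
      using colsum cyc_deg[OF n3] by (simp add: cycle_vertices_def)
  next
    fix u v u' assume h: "u \<in> {..<m}" "v \<in> {..<n}" "u' \<in> {..<m}"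
    have gd: "wdeg ?W (gam m n d) (u, v) = (if u mod d = v mod d then real d / (real m * real n) else 0)"
      using gam_deg[OF m3 n3, of "(u,v)"] h by simp
    have dg: "wdeg {..<m} (cycle_weight m) u = 1 / real m"
      using cyc_deg[OF m3, of u] h by (simp add: cycle_vertices_def)
    have ne: "(u + 1) mod m \<noteq> (u + m - 1) mod m" using pm_ne[OF m3, of u] h by simp
    show "wdeg {..<m} (cycle_weight m) u * (\<Sum>v'\<in>{..<n}. gam m n d (u, v) (u', v')) =
          cycle_weight m u u' * wdeg ?W (gam m n d) (u, v)"
      unfolding dg gam_row[OF m3 n3 h(1,2,3)[simplified]] gd
        cw_char[OF m3 h(1,3)[simplified]]
      using h ne by auto
  next
    fix u v v' assume h: "u \<in> {..<m}" "v \<in> {..<n}" "v' \<in> {..<n}"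
    have gd: "wdeg ?W (gam m n d) (u, v) = (if u mod d = v mod d then real d / (real m * real n) else 0)"
      using gam_deg[OF m3 n3, of "(u,v)"] h by simp
    have dg: "wdeg {..<n} (cycle_weight n) v = 1 / real n"
      using cyc_deg[OF n3, of v] h by (simp add: cycle_vertices_def)
    have ne: "(v + 1) mod n \<noteq> (v + n - 1) mod n" using pm_ne[OF n3, of v] h by simp
    show "wdeg {..<n} (cycle_weight n) v * (\<Sum>u'\<in>{..<m}. gam m n d (u, v) (u', v')) =
          cycle_weight n v v' * wdeg ?W (gam m n d) (u, v)"
      unfolding dg gam_col[OF m3 n3 h(1,2,3)[simplified]] gd
        cw_char[OF n3 h(2,3)[simplified]]
      using h ne by auto
  qed
qed


lemma per_mult:
  fixes h :: "int \<Rightarrow> real" and m :: int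
  assumes per: "\<And>a. h (a + m) = h a"
  shows "h (a + m * t) = h a"
proof -
  have nat_case: "h (b + m * int k) = h b" for b k
  proof (induction k arbitrary: b)
    case 0 then show ?case by simp
  next
    case (Suc k)
    have "h (b + m * int (Suc k)) = h ((b + m * int k) + m)" by (simp add: algebra_simps)
    also have "\<dots> = h b" using per Suc by simp
    finally show ?case .
  qed
  show ?thesis
  proof (cases "t \<ge> 0")
    case True
    then show ?thesis using nat_case[of a "nat t"] by simp
  next
    case False
    have "h a = h ((a + m * t) + m * int (nat (- t)))" using False by (simp add: algebra_simps)
    also have "\<dots> = h (a + m * t)" by (rule nat_case)
    finally show ?thesis by simp
  qed
qed

lemma per_const:
  fixes h :: "int \<Rightarrow> real" and m n :: int
  assumes m0: "m > 0" and cop: "coprime n m"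
    and perm: "\<And>a. h (a + m) = h a" and pern: "\<And>a. h (a + n) = h a"
  shows "h a = h 0"
proof -
  obtain x where x: "x \<ge> 0" "[n * x = 1] (mod m)"
    using cop m0 coprime_iff_invertible'_int by blast
  then obtain t where t: "n * x - 1 = m * t"
    unfolding cong_iff_dvd_diff by (auto elim: dvdE)
  have step: "h (b + 1) = h b" for b
  proof -
    have "h (b + 1) = h ((b + 1) + m * t)" by (rule per_mult[of h m, OF perm, symmetric])
    also have "(b + 1) + m * t = b + n * x" using t by simp
    also have "h (b + n * x) = h b" using per_mult[of h n, OF pern, of b x] by (simp add: mult.commute)
    finally show ?thesis .
  qed
  have up: "h (b + int k) = h b" for b k
  proof (induction k)
    case (Suc k)
    have "h (b + int (Suc k)) = h ((b + int k) + 1)" by (simp add: algebra_simps)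
    also have "\<dots> = h b" using step Suc by simp
    finally show ?case .
  qed simp
  have "h a = h (a mod m + m * (a div m))" by simp
  also have "\<dots> = h (a mod m)" by (rule per_mult[of h m, OF perm])
  also have "\<dots> = h (0 + int (nat (a mod m)))" using m0 by simp
  also have "\<dots> = h 0" by (rule up)
  finally show ?thesis .
qed

lemma harm_const:
  fixes h :: "int \<Rightarrow> real" and m n :: int
  assumes m0: "m > 0" and cop: "coprime n m"
    and perm: "\<And>a. h (a + m) = h a" and harm: "\<And>a. h (a + n) + h (a - n) = 2 * h a"
  shows "h a = h 0"
proof -
  define d where "d a = h (a + n) - h a" for a
  have dperm: "d (a + m) = d a" for a unfolding d_def using perm[of a] perm[of "a + n"]
    by (simp add: algebra_simps)
  have dpern: "d (a + n) = d a" for a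
    using harm[of "a + n"] unfolding d_def by (simp add: algebra_simps)
  have dc: "d a = d 0" for a by (rule per_const[OF m0 cop dperm dpern])
  have lin: "h (n * int k) = h 0 + real k * d 0" for k
  proof (induction k)
    case 0 then show ?case by simp
  next
    case (Suc k)
    have "h (n * int (Suc k)) = h (n * int k) + d (n * int k)" unfolding d_def by (simp add: algebra_simps)
    then show ?case using Suc dc[of "n * int k"] by (simp add: algebra_simps)
  qed
  have "h (n * int (nat m)) = h (0 + m * n)" using m0 by (simp add: mult.commute)
  also have "\<dots> = h 0" by (rule per_mult[of h m, OF perm])
  finally have "real (nat m) * d 0 = 0" using lin[of "nat m"] by simp
  then have "d 0 = 0" using m0 by simp
  then have pern: "h (a + n) = h a" for a using dc[of a] unfolding d_def by simp
  show ?thesis by (rule per_const[OF m0 cop perm pern])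
qed


definition Cop :: "nat \<Rightarrow> int \<Rightarrow> (int \<Rightarrow> real) \<Rightarrow> int \<Rightarrow> real" where
  "Cop m k f x = f ((x + k) mod int m) + f ((x - k) mod int m)"

definition Fb :: "(nat \<times> nat \<Rightarrow> real) \<Rightarrow> nat \<Rightarrow> nat \<Rightarrow> (int \<Rightarrow> real) \<Rightarrow> (int \<Rightarrow> real) \<Rightarrow> real" where
  "Fb r m n f g = (\<Sum>u\<in>{..<m}. \<Sum>v\<in>{..<n}. r (u, v) * f (int u) * g (int v))"

lemma Fb_add1: "Fb r m n (\<lambda>x. a x + b x) g = Fb r m n a g + Fb r m n b g"
  unfolding Fb_def by (simp add: sum.distrib[symmetric] algebra_simps)
lemma Fb_diff1: "Fb r m n (\<lambda>x. a x - b x) g = Fb r m n a g - Fb r m n b g"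
  unfolding Fb_def by (simp add: sum_subtractf[symmetric] algebra_simps)
lemma Fb_add2: "Fb r m n f (\<lambda>x. a x + b x) = Fb r m n f a + Fb r m n f b"
  unfolding Fb_def by (simp add: sum.distrib[symmetric] algebra_simps)
lemma Fb_diff2: "Fb r m n f (\<lambda>x. a x - b x) = Fb r m n f a - Fb r m n f b"
  unfolding Fb_def by (simp add: sum_subtractf[symmetric] algebra_simps)

lemma Cop_comm: "Cop m a (Cop m b f) = Cop m b (Cop m a f)"
  unfolding Cop_def by (rule ext) (simp add: mod_simps algebra_simps)

lemma Cop_rec: "Cop m (k + 2) f = (\<lambda>x. Cop m 1 (Cop m (k + 1) f) x - Cop m k f x)"
  by (rule ext) (simp only: Cop_def mod_add_left_eq mod_diff_left_eq, simp add: algebra_simps)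

lemma Fb_Cop0_1: "Fb r m n (Cop m 0 f) g = 2 * Fb r m n f g"
  unfolding Fb_def Cop_def by (simp add: sum_distrib_left algebra_simps)
lemma Fb_Cop0_2: "Fb r m n f (Cop n 0 g) = 2 * Fb r m n f g"
  unfolding Fb_def Cop_def by (simp add: sum_distrib_left algebra_simps)
lemma Fb_Copn_2: "Fb r m n f (Cop n (int n) g) = 2 * Fb r m n f g"
  unfolding Fb_def Cop_def by (simp add: sum_distrib_left algebra_simps)

lemma cheb:
  assumes key: "\<And>f g. Fb r m n (Cop m 1 f) g = Fb r m n f (Cop n 1 g)"
  shows "Fb r m n (Cop m (int k) f) g = Fb r m n f (Cop n (int k) g)"
proof -
  have "(\<forall>f g. Fb r m n (Cop m (int k) f) g = Fb r m n f (Cop n (int k) g)) \<and>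
        (\<forall>f g. Fb r m n (Cop m (int (Suc k)) f) g = Fb r m n f (Cop n (int (Suc k)) g))"
  proof (induction k)
    case 0
    then show ?case using key by (simp add: Fb_Cop0_1 Fb_Cop0_2)
  next
    case (Suc k)
    have "Fb r m n (Cop m (int (Suc (Suc k))) f) g = Fb r m n f (Cop n (int (Suc (Suc k))) g)" for f g
    proof -
      have e1: "int (Suc (Suc k)) = int k + 2" by simp
      have "Fb r m n (Cop m (int (Suc (Suc k))) f) g
          = Fb r m n (Cop m 1 (Cop m (int k + 1) f)) g - Fb r m n (Cop m (int k) f) g"
        unfolding e1 Cop_rec Fb_diff1 ..
      also have "\<dots> = Fb r m n (Cop m (int k + 1) f) (Cop n 1 g) - Fb r m n f (Cop n (int k) g)"
        using key Suc.IH by simp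
      also have "\<dots> = Fb r m n f (Cop n (int k + 1) (Cop n 1 g)) - Fb r m n f (Cop n (int k) g)"
        using Suc.IH by (simp only: int_Suc)
      also have "\<dots> = Fb r m n f (Cop n (int (Suc (Suc k))) g)"
        unfolding e1 Cop_rec Fb_diff2 Cop_comm[of n "int k + 1"] ..
      finally show ?thesis .
    qed
    then show ?case using Suc.IH by simp
  qed
  then show ?thesis by blast
qed


lemma int_mod_pred: "u < m \<Longrightarrow> int ((u + m - 1) mod m) = (int u - 1) mod int m"
proof -
  assume "u < m"
  then have "int (u + m - 1) = (int u - 1) + int m" by simp
  then show ?thesis by (simp add: of_nat_mod)
qed

lemma int_mod_succ: "int ((u + 1) mod m) = (int u + 1) mod int m"
  unfolding zmod_int by (simp add: add.commute)

lemma joining_key: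
  fixes \<gamma> :: "nat \<times> nat \<Rightarrow> nat \<times> nat \<Rightarrow> real"
  assumes m3: "m \<ge> 3" and n3: "n \<ge> 3"
    and J: "weight_joining {..<m} (cycle_weight m) {..<n} (cycle_weight n) \<gamma>"
  shows "Fb (wdeg ({..<m} \<times> {..<n}) \<gamma>) m n (Cop m 1 f) g = Fb (wdeg ({..<m} \<times> {..<n}) \<gamma>) m n f (Cop n 1 g)"
proof -
  let ?W = "{..<m} \<times> {..<n}"
  define r where "r = wdeg ?W \<gamma>"
  have sym: "\<gamma> x y = \<gamma> y x" if "x \<in> ?W" "y \<in> ?W" for x y
    using J that unfolding weight_joining_def weight_fun_def by blast
  have c4: "wdeg {..<m} (cycle_weight m) u * (\<Sum>v'\<in>{..<n}. \<gamma> (u, v) (u', v')) = cycle_weight m u u' * r (u, v)"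
    if "u < m" "v < n" "u' < m" for u v u'
    using J that unfolding weight_joining_def r_def by auto
  have c5: "wdeg {..<n} (cycle_weight n) v * (\<Sum>u'\<in>{..<m}. \<gamma> (u, v) (u', v')) = cycle_weight n v v' * r (u, v)"
    if "u < m" "v < n" "v' < n" for u v v'
    using J that unfolding weight_joining_def r_def by auto
  have row: "(\<Sum>v'\<in>{..<n}. \<gamma> (u, v) (u', v')) = real m * cycle_weight m u u' * r (u, v)"
    if "u < m" "v < n" "u' < m" for u v u'
  proof -
    have dg: "wdeg {..<m} (cycle_weight m) u = 1 / real m" using cyc_deg[OF m3 that(1)] by (simp add: cycle_vertices_def)
    have "1 / real m * (\<Sum>v'\<in>{..<n}. \<gamma> (u, v) (u', v')) = cycle_weight m u u' * r (u, v)"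
      using c4[OF that] unfolding dg .
    then show ?thesis using m3 by (simp add: field_simps)
  qed
  have col: "(\<Sum>u'\<in>{..<m}. \<gamma> (u, v) (u', v')) = real n * cycle_weight n v v' * r (u, v)"
    if "u < m" "v < n" "v' < n" for u v v'
  proof -
    have dg: "wdeg {..<n} (cycle_weight n) v = 1 / real n" using cyc_deg[OF n3 that(2)] by (simp add: cycle_vertices_def)
    have "1 / real n * (\<Sum>u'\<in>{..<m}. \<gamma> (u, v) (u', v')) = cycle_weight n v v' * r (u, v)"
      using c5[OF that] unfolding dg .
    then show ?thesis using n3 by (simp add: field_simps)
  qed
  have B1: "(\<Sum>y\<in>?W. \<gamma> (u, v) y * f (int (fst y))) = r (u, v) * Cop m 1 f (int u) / 2"
    if "u < m" "v < n" for u v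
  proof -
    have "(\<Sum>y\<in>?W. \<gamma> (u, v) y * f (int (fst y))) = (\<Sum>u'\<in>{..<m}. \<Sum>v'\<in>{..<n}. \<gamma> (u, v) (u', v') * f (int u'))"
      by (simp add: sum.cartesian_product case_prod_beta)
    also have "\<dots> = (\<Sum>u'\<in>{..<m}. f (int u') * (\<Sum>v'\<in>{..<n}. \<gamma> (u, v) (u', v')))"
      by (simp add: sum_distrib_left mult.commute)
    also have "\<dots> = (\<Sum>u'\<in>{..<m}. f (int u') * cycle_weight m u u') * (real m * r (u, v))"
      unfolding sum_distrib_right using that by (intro sum.cong) (auto simp: row)
    also have "\<dots> = (f (int ((u + 1) mod m)) + f (int ((u + m - 1) mod m))) / (2 * real m) * (real m * r (u, v))"
      using cyc_sum[OF m3 that(1), of "\<lambda>u'. f (int u')"] by simp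
    also have "\<dots> = r (u, v) * Cop m 1 f (int u) / 2"
      unfolding Cop_def int_mod_pred[OF that(1)] int_mod_succ using m3 by (simp add: field_simps)
    finally show ?thesis .
  qed
  have B2: "(\<Sum>y\<in>?W. \<gamma> (u, v) y * g (int (snd y))) = r (u, v) * Cop n 1 g (int v) / 2"
    if "u < m" "v < n" for u v
  proof -
    have "(\<Sum>y\<in>?W. \<gamma> (u, v) y * g (int (snd y))) = (\<Sum>u'\<in>{..<m}. \<Sum>v'\<in>{..<n}. \<gamma> (u, v) (u', v') * g (int v'))"
      by (simp add: sum.cartesian_product case_prod_beta)
    also have "\<dots> = (\<Sum>v'\<in>{..<n}. \<Sum>u'\<in>{..<m}. \<gamma> (u, v) (u', v') * g (int v'))"
      by (rule sum.swap)
    also have "\<dots> = (\<Sum>v'\<in>{..<n}. g (int v') * (\<Sum>u'\<in>{..<m}. \<gamma> (u, v) (u', v')))"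
      by (simp add: sum_distrib_left mult.commute)
    also have "\<dots> = (\<Sum>v'\<in>{..<n}. g (int v') * cycle_weight n v v') * (real n * r (u, v))"
      unfolding sum_distrib_right using that by (intro sum.cong) (auto simp: col)
    also have "\<dots> = (g (int ((v + 1) mod n)) + g (int ((v + n - 1) mod n))) / (2 * real n) * (real n * r (u, v))"
      using cyc_sum[OF n3 that(2), of "\<lambda>v'. g (int v')"] by simp
    also have "\<dots> = r (u, v) * Cop n 1 g (int v) / 2"
      unfolding Cop_def int_mod_pred[OF that(2)] int_mod_succ using n3 by (simp add: field_simps)
    finally show ?thesis .
  qed
  have S1: "(\<Sum>x\<in>?W. \<Sum>y\<in>?W. \<gamma> x y * f (int (fst y)) * g (int (snd x))) = Fb r m n (Cop m 1 f) g / 2"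
  proof -
    have "(\<Sum>x\<in>?W. \<Sum>y\<in>?W. \<gamma> x y * f (int (fst y)) * g (int (snd x)))
        = (\<Sum>x\<in>?W. g (int (snd x)) * (\<Sum>y\<in>?W. \<gamma> x y * f (int (fst y))))"
      by (simp add: sum_distrib_left algebra_simps)
    also have "\<dots> = (\<Sum>u\<in>{..<m}. \<Sum>v\<in>{..<n}. g (int v) * (\<Sum>y\<in>?W. \<gamma> (u, v) y * f (int (fst y))))"
      by (simp add: sum.cartesian_product case_prod_beta)
    also have "\<dots> = (\<Sum>u\<in>{..<m}. \<Sum>v\<in>{..<n}. g (int v) * (r (u, v) * Cop m 1 f (int u) / 2))"
      by (intro sum.cong refl) (simp add: B1)
    also have "\<dots> = Fb r m n (Cop m 1 f) g / 2"
      unfolding Fb_def by (simp add: sum_divide_distrib algebra_simps)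
    finally show ?thesis .
  qed
  have S2: "(\<Sum>x\<in>?W. \<Sum>y\<in>?W. \<gamma> x y * f (int (fst x)) * g (int (snd y))) = Fb r m n f (Cop n 1 g) / 2"
  proof -
    have "(\<Sum>x\<in>?W. \<Sum>y\<in>?W. \<gamma> x y * f (int (fst x)) * g (int (snd y)))
        = (\<Sum>x\<in>?W. f (int (fst x)) * (\<Sum>y\<in>?W. \<gamma> x y * g (int (snd y))))"
      by (simp add: sum_distrib_left algebra_simps)
    also have "\<dots> = (\<Sum>u\<in>{..<m}. \<Sum>v\<in>{..<n}. f (int u) * (\<Sum>y\<in>?W. \<gamma> (u, v) y * g (int (snd y))))"
      by (simp add: sum.cartesian_product case_prod_beta)
    also have "\<dots> = (\<Sum>u\<in>{..<m}. \<Sum>v\<in>{..<n}. f (int u) * (r (u, v) * Cop n 1 g (int v) / 2))"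
      by (intro sum.cong refl) (simp add: B2)
    also have "\<dots> = Fb r m n f (Cop n 1 g) / 2"
      unfolding Fb_def by (simp add: sum_divide_distrib algebra_simps)
    finally show ?thesis .
  qed
  have "(\<Sum>x\<in>?W. \<Sum>y\<in>?W. \<gamma> x y * f (int (fst y)) * g (int (snd x)))
      = (\<Sum>y\<in>?W. \<Sum>x\<in>?W. \<gamma> x y * f (int (fst y)) * g (int (snd x)))"
    by (rule sum.swap)
  also have "\<dots> = (\<Sum>y\<in>?W. \<Sum>x\<in>?W. \<gamma> y x * f (int (fst y)) * g (int (snd x)))"
    by (intro sum.cong refl) (simp add: sym)
  finally have "Fb r m n (Cop m 1 f) g / 2 = Fb r m n f (Cop n 1 g) / 2" using S1 S2 by simp
  then show ?thesis unfolding r_def by simp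
qed


lemma mod_shift_iff1:
  fixes x k a M :: int
  shows "(x + k) mod M = a mod M \<longleftrightarrow> x mod M = (a - k) mod M"
  by (simp add: mod_eq_dvd_iff algebra_simps)

lemma mod_shift_iff2:
  fixes x k a M :: int
  shows "(x - k) mod M = a mod M \<longleftrightarrow> x mod M = (a + k) mod M"
  by (simp add: mod_eq_dvd_iff algebra_simps)

lemma coprime_weak:
  fixes \<gamma> :: "nat \<times> nat \<Rightarrow> nat \<times> nat \<Rightarrow> real"
  assumes m3: "m \<ge> 3" and n3: "n \<ge> 3" and g1: "gcd m n = 1"
    and J: "weight_joining {..<m} (cycle_weight m) {..<n} (cycle_weight n) \<gamma>"
    and u0: "u0 < m" and v0: "v0 < n"
  shows "wdeg ({..<m} \<times> {..<n}) \<gamma> (u0, v0) = (1 / real m) * (1 / real n)"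
proof -
  define r where "r = wdeg ({..<m} \<times> {..<n}) \<gamma>"
  have key: "Fb r m n (Cop m 1 f) g = Fb r m n f (Cop n 1 g)" for f g
    unfolding r_def by (rule joining_key[OF m3 n3 J])
  have twice: "Fb r m n (Cop m (int n) f) g = 2 * Fb r m n f g" for f g
    using cheb[of r m n, OF key, of n f g] Fb_Copn_2 by simp
  define G where "G = (\<lambda>y::int. if y = int v0 then 1 else (0::real))"
  define dl where "dl a = (\<lambda>y::int. if y mod int m = a mod int m then 1 else (0::real))" for a
  define h where "h a = Fb r m n (dl a) G" for a
  have FbG: "Fb r m n F G = (\<Sum>u\<in>{..<m}. r (u, v0) * F (int u))" for F
    unfolding Fb_def G_def using v0 by (simp add: if_distrib cong: if_cong)
  have hu: "h (int u) = r (u, v0)" if "u < m" for u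
  proof -
    have "h (int u) = (\<Sum>u'\<in>{..<m}. if u' = u then r (u', v0) else 0)"
      unfolding h_def FbG dl_def using that
      by (intro sum.cong refl) (auto simp: zmod_int[symmetric])
    also have "\<dots> = r (u, v0)" using that by simp
    finally show ?thesis .
  qed
  have hper: "h (a + int m) = h a" for a
    unfolding h_def dl_def by simp
  have copd: "Cop m (int n) (dl a) = (\<lambda>x. dl (a - int n) x + dl (a + int n) x)" for a
    unfolding Cop_def dl_def by (rule ext) (simp add: mod_shift_iff1 mod_shift_iff2)
  have harm: "h (a + int n) + h (a - int n) = 2 * h a" for a
  proof -
    have "2 * h a = Fb r m n (Cop m (int n) (dl a)) G" unfolding h_def by (simp add: twice)
    also have "\<dots> = h (a - int n) + h (a + int n)" unfolding copd Fb_add1 h_def ..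
    finally show ?thesis by simp
  qed
  have cop: "coprime (int n) (int m)" using g1 by (simp add: coprime_iff_gcd_eq_1 gcd.commute)
  have hc: "h a = h 0" for a
    by (rule harm_const[of "int m" "int n" h]) (use m3 cop hper harm in auto)
  have rc: "r (u, v0) = h 0" if "u < m" for u using hu[OF that] hc[of "int u"] by simp
  have "(\<Sum>u\<in>{..<m}. r (u, v0)) = wdeg {..<n} (cycle_weight n) v0"
    using J v0 unfolding weight_joining_def r_def by auto
  also have "\<dots> = 1 / real n" using cyc_deg[OF n3 v0] by (simp add: cycle_vertices_def)
  finally have eq: "real m * h 0 = 1 / real n" using rc by simp
  have mnz: "real m \<noteq> 0" using m3 by simp
  have "h 0 = (real m * h 0) / real m" using mnz by simp
  also have "\<dots> = (1 / real n) / real m" unfolding eq ..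
  finally have "h 0 = 1 / real m * (1 / real n)" by simp
  then show ?thesis using rc[OF u0] unfolding r_def by simp
qed


theorem proposition3p7:
  fixes m n :: nat
  assumes "m \<ge> 3" and "n \<ge> 3"
  shows "\<not> strongly_disjoint (cycle_vertices m) (cycle_weight m) (cycle_vertices n) (cycle_weight n)
    \<and> (weakly_disjoint (cycle_vertices m) (cycle_weight m) (cycle_vertices n) (cycle_weight n)
         \<longleftrightarrow> gcd m n = 1)"
proof (intro conjI)
  note m3 = assms(1) and n3 = assms(2)
  show "\<not> strongly_disjoint (cycle_vertices m) (cycle_weight m) (cycle_vertices n) (cycle_weight n)"
  proof
    assume SD: "strongly_disjoint (cycle_vertices m) (cycle_weight m) (cycle_vertices n) (cycle_weight n)"
    have J: "weight_joining {..<m} (cycle_weight m) {..<n} (cycle_weight n) (gam m n 1)"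
      by (rule gam_joining) (use m3 n3 in auto)
    have "gam m n 1 (0, 0) (1, n - 1) = cycle_weight m 0 1 * cycle_weight n 0 (n - 1)"
      using SD J m3 n3 unfolding strongly_disjoint_def cycle_vertices_def by force
    moreover have "gam m n 1 (0, 0) (1, n - 1) = 0"
      using m3 n3 unfolding gam_def Np_def Nm_def by auto
    moreover have "cycle_weight m 0 1 = 1 / (2 * real m)" using m3 unfolding cycle_weight_def by auto
    moreover have "cycle_weight n 0 (n - 1) = 1 / (2 * real n)" using n3 unfolding cycle_weight_def by auto
    ultimately show False using m3 n3 by simp
  qed
  show "weakly_disjoint (cycle_vertices m) (cycle_weight m) (cycle_vertices n) (cycle_weight n) \<longleftrightarrow> gcd m n = 1"
  proof
    assume WD: "weakly_disjoint (cycle_vertices m) (cycle_weight m) (cycle_vertices n) (cycle_weight n)"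
    show "gcd m n = 1"
    proof (rule ccontr)
      assume ne: "gcd m n \<noteq> 1"
      define d where "d = gcd m n"
      have d0: "d > 0" using m3 unfolding d_def by simp
      have d2: "d \<ge> 2" using d0 ne unfolding d_def by linarith
      have J: "weight_joining {..<m} (cycle_weight m) {..<n} (cycle_weight n) (gam m n d)"
        by (rule gam_joining) (use m3 n3 d0 in \<open>auto simp: d_def\<close>)
      have "wdeg ({..<m} \<times> {..<n}) (gam m n d) (0, 1) = wdeg {..<m} (cycle_weight m) 0 * wdeg {..<n} (cycle_weight n) 1"
        using WD J m3 n3 unfolding weakly_disjoint_def cycle_vertices_def by force
      moreover have "wdeg ({..<m} \<times> {..<n}) (gam m n d) (0, 1) = 0"
        using gam_deg[OF m3 n3, of "(0, 1)" d] m3 n3 d2 by simp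
      moreover have "wdeg {..<m} (cycle_weight m) 0 = 1 / real m"
        using cyc_deg[OF m3, of 0] m3 by (simp add: cycle_vertices_def)
      moreover have "wdeg {..<n} (cycle_weight n) 1 = 1 / real n"
        using cyc_deg[OF n3, of 1] n3 by (simp add: cycle_vertices_def)
      ultimately show False using m3 n3 by simp
    qed
  next
    assume g1: "gcd m n = 1"
    show "weakly_disjoint (cycle_vertices m) (cycle_weight m) (cycle_vertices n) (cycle_weight n)"
      unfolding weakly_disjoint_def
    proof (intro allI impI ballI)
      fix \<gamma> u v
      assume J: "weight_joining (cycle_vertices m) (cycle_weight m) (cycle_vertices n) (cycle_weight n) \<gamma>"
        and u: "u \<in> cycle_vertices m" and v: "v \<in> cycle_vertices n"
      have J': "weight_joining {..<m} (cycle_weight m) {..<n} (cycle_weight n) \<gamma>"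
        using J by (simp add: cycle_vertices_def)
      have uv: "u < m" "v < n" using u v by (auto simp: cycle_vertices_def)
      show "wdeg (cycle_vertices m \<times> cycle_vertices n) \<gamma> (u, v) =
            wdeg (cycle_vertices m) (cycle_weight m) u * wdeg (cycle_vertices n) (cycle_weight n) v"
        using coprime_weak[OF m3 n3 g1 J' uv] cyc_deg[OF m3 uv(1)] cyc_deg[OF n3 uv(2)]
        by (simp add: cycle_vertices_def)
    qed
  qed
qed

end
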